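(* Let $\mathcal E$ be an exchangeability system for a noncommutative probability space $(\mathcal A,\phi)$, let $X_1,\dots,X_n\in\mathcal A$ and $\pi\in\Pi_n$. For each block $B=\{k_1<k_2<\dots<k_b\}$ of $\pi$ choose a primitive root of unity $\omega_b$ of order $b=|B|$ and set, for $i\in B$, $$X_i^{\pi,\omega}=\omega_bX_i^{(k_1)}+\omega_b^2X_i^{(k_2)}+\dots+\omega_b^{b}X_i^{(k_b)}.$$ Then $$K_\pi(X_1,\dots,X_n)=\frac{1}{\prod_{B\in\pi}|B|}\,\tilde\phi(X_1^{\pi,\omega}X_2^{\pi,\omega}\cdots X_n^{\pi,\omega}).$$
   Context: A noncommutative probability space is a pair $(\mathcal A,\phi)$ of a complex unital algebra $\mathcal A$ and a unital linear functional $\phi$. An exchangeability system $\mathcal E$ for $(\mathcal A,\phi)$ consists of a noncommutative probability space $(\mathcal U,\tilde\phi)$ and a family $(\iota_k)_{k\in\mathbb N}$ of embeddings (injective unital algebra homomorphisms) $\iota_k:\mathcal A\to\mathcal A_k\subseteq\mathcal U$ with $\tilde\phi\circ\iota_k=\phi$; write $X^{(k)}=\iota_k(X)$. It is required that for all $X_1,\dots,X_n\in\mathcal A$, all indices $i_1,\dots,i_n\in\mathbb N$ and every bijection $\sigma$ of $\mathbb N$, $\tilde\phi(X_1^{(i_1)}\cdots X_n^{(i_n)})=\tilde\phi(X_1^{(\sigma(i_1))}\cdots X_n^{(\sigma(i_n))})$; so this value depends only on the kernel of $j\mapsto i_j$ (partition of $[n]$ into level sets), and for a partition $\sigma$ of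 $[n]$ it is denoted $\phi_\sigma(X_1,\dots,X_n)$. $\Pi_n$ is the lattice of set partitions of $[n]$ ordered by refinement, with Möbius function $\mu$. The partitioned cumulant is $K_\pi(X_1,\dots,X_n)=\sum_{\sigma\in\Pi_n,\ \sigma\le\pi}\phi_\sigma(X_1,\dots,X_n)\,\mu(\sigma,\pi)$. *)

theory Defs
  imports Complex_Main "HOL-Library.Disjoint_Sets"
begin

definition complex_algebra :: "(complex \<Rightarrow> 'a::ring_1 \<Rightarrow> 'a) \<Rightarrow> bool" where
  "complex_algebra sc \<longleftrightarrow> vector_space sc \<and>
     (\<forall>c x y. sc c (x * y) = sc c x * y \<and> sc c (x * y) = x * sc c y)"

definition ncps :: "(complex \<Rightarrow> 'a::ring_1 \<Rightarrow> 'a) \<Rightarrow> ('a \<Rightarrow> complex) \<Rightarrow> bool" where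
  "ncps sc phi \<longleftrightarrow> complex_algebra sc \<and> Vector_Spaces.linear sc (*) phi \<and> phi 1 = 1"

definition alg_embedding ::
  "(complex \<Rightarrow> 'a::ring_1 \<Rightarrow> 'a) \<Rightarrow> (complex \<Rightarrow> 'u::ring_1 \<Rightarrow> 'u) \<Rightarrow> ('a \<Rightarrow> 'u) \<Rightarrow> bool" where
  "alg_embedding scA scU f \<longleftrightarrow> inj f \<and> Vector_Spaces.linear scA scU f \<and> f 1 = 1 \<and>
     (\<forall>x y. f (x * y) = f x * f y)"

definition exchangeability_system ::
  "(complex \<Rightarrow> 'a::ring_1 \<Rightarrow> 'a) \<Rightarrow> ('a \<Rightarrow> complex) \<Rightarrow>
   (complex \<Rightarrow> 'u::ring_1 \<Rightarrow> 'u) \<Rightarrow> ('u \<Rightarrow> complex) \<Rightarrow> (nat \<Rightarrow> 'a \<Rightarrow> 'u) \<Rightarrow> bool" where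
  "exchangeability_system scA phi scU phiU iota \<longleftrightarrow>
     ncps scA phi \<and> ncps scU phiU \<and>
     (\<forall>k. alg_embedding scA scU (iota k) \<and> (\<forall>x. phiU (iota k x) = phi x)) \<and>
     (\<forall>(xs :: ('a \<times> nat) list) (s :: nat \<Rightarrow> nat). bij s \<longrightarrow>
        phiU (prod_list (map (\<lambda>(x, i). iota i x) xs)) =
        phiU (prod_list (map (\<lambda>(x, i). iota (s i) x) xs)))"

definition refines :: "'b set set \<Rightarrow> 'b set set \<Rightarrow> bool" where
  "refines \<sigma> \<pi> \<longleftrightarrow> (\<forall>B\<in>\<sigma>. \<exists>C\<in>\<pi>. B \<subseteq> C)"

definition set_partitions :: "nat \<Rightarrow> nat set set set" where
  "set_partitions n = {\<sigma>. partition_on {0..<n} \<sigma>}"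

definition block_of :: "'b set set \<Rightarrow> 'b \<Rightarrow> 'b set" where
  "block_of \<pi> j = (THE B. B \<in> \<pi> \<and> j \<in> B)"

text \<open>Standard recursion mu(x,x) = 1, mu(x,y) = - sum_{x <= z < y} mu(x,z); the fuel
  argument (card P) bounds the length of strict chains, so it is never exhausted.\<close>
fun mob_aux :: "nat \<Rightarrow> 'p set \<Rightarrow> ('p \<Rightarrow> 'p \<Rightarrow> bool) \<Rightarrow> 'p \<Rightarrow> 'p \<Rightarrow> int" where
  "mob_aux 0 P le x y = (if x = y then 1 else 0)"
| "mob_aux (Suc k) P le x y = (if x = y then 1 else
      - (\<Sum>z\<in>{z\<in>P. le x z \<and> le z y \<and> z \<noteq> y}. mob_aux k P le x z))"

definition mobius :: "'p set \<Rightarrow> ('p \<Rightarrow> 'p \<Rightarrow> bool) \<Rightarrow> 'p \<Rightarrow> 'p \<Rightarrow> int" where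
  "mobius P le x y = (if x \<in> P \<and> y \<in> P \<and> le x y then mob_aux (card P) P le x y else 0)"

definition mu_part :: "nat \<Rightarrow> nat set set \<Rightarrow> nat set set \<Rightarrow> int" where
  "mu_part n \<sigma> \<pi> = mobius (set_partitions n) refines \<sigma> \<pi>"

text \<open>phi_sigma(X_0,...,X_{n-1}) = phiU(X_0^{(i_0)} ... X_{n-1}^{(i_{n-1})}) for an index
  map with kernel sigma; we use i_j = min of the block of sigma containing j.\<close>
definition phi_part ::
  "('u::ring_1 \<Rightarrow> complex) \<Rightarrow> (nat \<Rightarrow> 'a \<Rightarrow> 'u) \<Rightarrow> nat \<Rightarrow> nat set set \<Rightarrow> (nat \<Rightarrow> 'a) \<Rightarrow> complex" where
  "phi_part phiU iota n \<sigma> X =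
     phiU (prod_list (map (\<lambda>j. iota (Min (block_of \<sigma> j)) (X j)) [0..<n]))"

definition cumulant ::
  "('u::ring_1 \<Rightarrow> complex) \<Rightarrow> (nat \<Rightarrow> 'a \<Rightarrow> 'u) \<Rightarrow> nat \<Rightarrow> nat set set \<Rightarrow> (nat \<Rightarrow> 'a) \<Rightarrow> complex" where
  "cumulant phiU iota n \<pi> X =
     (\<Sum>\<sigma>\<in>{\<sigma>\<in>set_partitions n. refines \<sigma> \<pi>}.
        phi_part phiU iota n \<sigma> X * of_int (mu_part n \<sigma> \<pi>))"

definition primitive_root :: "nat \<Rightarrow> complex \<Rightarrow> bool" where
  "primitive_root b w \<longleftrightarrow> w ^ b = 1 \<and> (\<forall>k. 0 < k \<and> k < b \<longrightarrow> w ^ k \<noteq> 1)"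

definition X_twist ::
  "(complex \<Rightarrow> 'u::ring_1 \<Rightarrow> 'u) \<Rightarrow> (nat \<Rightarrow> 'a \<Rightarrow> 'u) \<Rightarrow> nat set set \<Rightarrow> (nat set \<Rightarrow> complex)
    \<Rightarrow> (nat \<Rightarrow> 'a) \<Rightarrow> nat \<Rightarrow> 'u" where
  "X_twist scU iota \<pi> \<omega> X i =
     (let B = block_of \<pi> i; ks = sorted_list_of_set B in
       (\<Sum>j<card B. scU (\<omega> B ^ (j + 1)) (iota (ks ! j) (X i))))"

end

theory Submission
  imports Defs
begin

locale fposet =
  fixes P :: "'p set" and le :: "'p \<Rightarrow> 'p \<Rightarrow> bool"
  assumes fin: "finite P"
    and prefl: "\<And>x. x \<in> P \<Longrightarrow> le x x"
    and ptrans: "\<And>x y z. x \<in> P \<Longrightarrow> y \<in> P \<Longrightarrow> z \<in> P \<Longrightarrow> le x y \<Longrightarrow> le y z \<Longrightarrow> le x z"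
    and pantisym: "\<And>x y. x \<in> P \<Longrightarrow> y \<in> P \<Longrightarrow> le x y \<Longrightarrow> le y x \<Longrightarrow> x = y"
begin

definition Iv where "Iv x y = {z\<in>P. le x z \<and> le z y}"

lemma Iv_fin: "finite (Iv x y)" unfolding Iv_def using fin by auto

lemma Iv_sub: "x \<in> P \<Longrightarrow> y \<in> P \<Longrightarrow> le x y \<Longrightarrow> z \<in> Iv x y \<Longrightarrow> z \<noteq> y \<Longrightarrow> Iv x z \<subseteq> Iv x y - {y}"
  unfolding Iv_def using ptrans pantisym by blast

lemma Iv_card_lt: "x \<in> P \<Longrightarrow> y \<in> P \<Longrightarrow> le x y \<Longrightarrow> z \<in> Iv x y \<Longrightarrow> z \<noteq> y \<Longrightarrow> card (Iv x z) < card (Iv x y)"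
proof -
  assume a: "x \<in> P" "y \<in> P" "le x y" "z \<in> Iv x y" "z \<noteq> y"
  have "Iv x z \<subseteq> Iv x y - {y}" using Iv_sub a by blast
  moreover have "y \<in> Iv x y" using a prefl unfolding Iv_def by auto
  ultimately have "Iv x z \<subset> Iv x y" by blast
  then show ?thesis using Iv_fin psubset_card_mono by blast
qed

lemma mob_aux_refl: "mob_aux k P le x x = 1" by (cases k) auto

lemma mob_aux_stable:
  "x \<in> P \<Longrightarrow> y \<in> P \<Longrightarrow> le x y \<Longrightarrow> card (Iv x y) \<le> Suc k \<Longrightarrow> mob_aux (Suc k) P le x y = mob_aux k P le x y"
proof (induction k arbitrary: y)
  case 0
  show ?case
  proof (cases "x = y")
    case True then show ?thesis by (simp add: mob_aux_refl)
  next
    case False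
    have "{x, y} \<subseteq> Iv x y" using 0 prefl unfolding Iv_def by auto
    then have "card {x,y} \<le> card (Iv x y)" using Iv_fin card_mono by blast
    then show ?thesis using 0 False by simp
  qed
next
  case (Suc k)
  show ?case
  proof (cases "x = y")
    case True then show ?thesis by (simp add: mob_aux_refl)
  next
    case False
    have S: "{z\<in>P. le x z \<and> le z y \<and> z \<noteq> y} = Iv x y - {y}" unfolding Iv_def by auto
    have "\<And>z. z \<in> Iv x y - {y} \<Longrightarrow> mob_aux (Suc k) P le x z = mob_aux k P le x z"
    proof -
      fix z assume z: "z \<in> Iv x y - {y}"
      have "card (Iv x z) < card (Iv x y)" using Iv_card_lt Suc.prems z by blast
      then show "mob_aux (Suc k) P le x z = mob_aux k P le x z"
        using Suc.IH[of z] Suc.prems z unfolding Iv_def by auto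
    qed
    then show ?thesis using False S by (simp del: mob_aux.simps(2)) (simp add: S)
  qed
qed

lemma mob_aux_ge:
  assumes "x \<in> P" "y \<in> P" "le x y" "card (Iv x y) \<le> Suc k" "k \<le> m"
  shows "mob_aux m P le x y = mob_aux k P le x y"
  using assms(5)
proof (induction m rule: dec_induct)
  case base then show ?case by simp
next
  case (step m)
  then show ?case using mob_aux_stable[of x y m] assms by simp
qed

lemma mobius_rec:
  assumes "x \<in> P" "y \<in> P" "le x y" "x \<noteq> y"
  shows "mobius P le x y = - (\<Sum>z\<in>Iv x y - {y}. mobius P le x z)"
proof -
  have "{x, y} \<subseteq> Iv x y" using assms prefl unfolding Iv_def by auto
  then have "card {x,y} \<le> card (Iv x y)" using Iv_fin card_mono by blast
  moreover have "card (Iv x y) \<le> card P" using fin card_mono unfolding Iv_def by fastforce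
  ultimately obtain k where k: "card P = Suc k" "card (Iv x y) \<le> Suc k" using assms(4)
    by (cases "card P") auto
  have S: "{z\<in>P. le x z \<and> le z y \<and> z \<noteq> y} = Iv x y - {y}" unfolding Iv_def by auto
  have eq: "mob_aux k P le x z = mobius P le x z" if z: "z \<in> Iv x y - {y}" for z
  proof -
    have "card (Iv x z) < card (Iv x y)" using Iv_card_lt assms z by blast
    then have "mob_aux (Suc k) P le x z = mob_aux k P le x z"
      using mob_aux_stable[of x z k] assms z k unfolding Iv_def by auto
    then show ?thesis using z k assms unfolding mobius_def Iv_def by auto
  qed
  have "mobius P le x y = mob_aux (Suc k) P le x y" using assms k unfolding mobius_def by simp
  also have "\<dots> = - (\<Sum>z\<in>Iv x y - {y}. mob_aux k P le x z)" using assms(4) S by simp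
  also have "\<dots> = - (\<Sum>z\<in>Iv x y - {y}. mobius P le x z)" using eq by simp
  finally show ?thesis .
qed

lemma mobius_sum:
  assumes "x \<in> P" "y \<in> P" "le x y"
  shows "(\<Sum>z\<in>Iv x y. mobius P le x z) = (if x = y then 1 else 0)"
proof (cases "x = y")
  case True
  then have "Iv x y = {x}" using assms pantisym prefl unfolding Iv_def by auto
  then show ?thesis using True assms prefl by (simp add: mobius_def mob_aux_refl)
next
  case False
  have yi: "y \<in> Iv x y" using assms prefl unfolding Iv_def by auto
  have "(\<Sum>z\<in>Iv x y. mobius P le x z) = mobius P le x y + (\<Sum>z\<in>Iv x y - {y}. mobius P le x z)"
    using yi Iv_fin by (simp add: sum.remove)
  then show ?thesis using mobius_rec[OF assms False] False by simp
qed

lemma mobius_unique: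
  fixes g :: "'p \<Rightarrow> complex"
  assumes y: "y \<in> P"
    and g: "\<And>x. x \<in> P \<Longrightarrow> le x y \<Longrightarrow> (\<Sum>z\<in>Iv x y. g z) = (if x = y then 1 else 0)"
    and x: "x \<in> P" "le x y"
  shows "g x = of_int (mobius P le x y)"
proof -
  have yi: "y \<in> Iv x y" using x y prefl unfolding Iv_def by auto
  have "of_int (mobius P le x y) = (\<Sum>r\<in>Iv x y. of_int (mobius P le x r) * (if r = y then 1 else 0 :: complex))"
  proof -
    have "(\<Sum>r\<in>Iv x y. of_int (mobius P le x r) * (if r = y then 1 else 0 :: complex))
       = (\<Sum>r\<in>Iv x y. if r = y then of_int (mobius P le x r) else 0)"
      by (intro sum.cong) auto
    then show ?thesis using yi Iv_fin by simp
  qed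
  also have "\<dots> = (\<Sum>r\<in>Iv x y. of_int (mobius P le x r) * (\<Sum>t\<in>Iv r y. g t))"
    by (intro sum.cong refl) (use g in \<open>auto simp: Iv_def\<close>)
  also have "\<dots> = (\<Sum>r\<in>Iv x y. \<Sum>t\<in>Iv x y. if le r t then of_int (mobius P le x r) * g t else 0)"
  proof (intro sum.cong refl)
    fix r assume r: "r \<in> Iv x y"
    have "Iv r y = {t \<in> Iv x y. le r t}" using r x y ptrans unfolding Iv_def by blast
    then show "of_int (mobius P le x r) * (\<Sum>t\<in>Iv r y. g t) =
      (\<Sum>t\<in>Iv x y. if le r t then of_int (mobius P le x r) * g t else 0)"
      using Iv_fin by (simp add: sum_distrib_left sum.inter_filter) (rule sum.cong[OF HOL.refl]; simp)
  qed
  also have "\<dots> = (\<Sum>t\<in>Iv x y. \<Sum>r\<in>Iv x y. if le r t then of_int (mobius P le x r) * g t else 0)"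
    by (rule sum.swap)
  also have "\<dots> = (\<Sum>t\<in>Iv x y. g t * of_int (\<Sum>r\<in>Iv x t. mobius P le x r))"
  proof (intro sum.cong refl)
    fix t assume t: "t \<in> Iv x y"
    have "Iv x t = {r \<in> Iv x y. le r t}" using t x y ptrans unfolding Iv_def by blast
    then show "(\<Sum>r\<in>Iv x y. if le r t then of_int (mobius P le x r) * g t else 0) =
       g t * of_int (\<Sum>r\<in>Iv x t. mobius P le x r)"
      using Iv_fin by (simp add: sum_distrib_left sum.inter_filter mult.commute) (rule sum.cong[OF HOL.refl]; simp)
  qed
  also have "\<dots> = (\<Sum>t\<in>Iv x y. g t * (if x = t then 1 else 0))"
    by (intro sum.cong refl) (subst mobius_sum, use x in \<open>auto simp: Iv_def\<close>)
  also have "\<dots> = (\<Sum>t\<in>Iv x y. if x = t then g t else 0)"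
    by (intro sum.cong) auto
  also have "\<dots> = g x" using Iv_fin x prefl unfolding Iv_def by (simp add: sum.delta)
  finally show ?thesis by simp
qed

end


lemma sp_def': "\<pi> \<in> set_partitions n \<longleftrightarrow> \<Union>\<pi> = {0..<n} \<and> {} \<notin> \<pi> \<and> (\<forall>a\<in>\<pi>. \<forall>b\<in>\<pi>. a \<noteq> b \<longrightarrow> a \<inter> b = {})"
  unfolding set_partitions_def partition_on_def disjoint_def by auto

lemma sp_block_fin: "\<pi> \<in> set_partitions n \<Longrightarrow> B \<in> \<pi> \<Longrightarrow> finite B \<and> B \<noteq> {} \<and> B \<subseteq> {0..<n}"
  unfolding sp_def' by (metis Union_upper finite_atLeastLessThan finite_subset)

lemma sp_fin: "\<pi> \<in> set_partitions n \<Longrightarrow> finite \<pi>"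
  unfolding sp_def' by (metis finite_UnionD finite_atLeastLessThan)

lemma block_of_eq: "\<pi> \<in> set_partitions n \<Longrightarrow> B \<in> \<pi> \<Longrightarrow> j \<in> B \<Longrightarrow> block_of \<pi> j = B"
  unfolding block_of_def sp_def' by (rule the_equality) blast+

lemma block_of_mem: "\<pi> \<in> set_partitions n \<Longrightarrow> j < n \<Longrightarrow> block_of \<pi> j \<in> \<pi> \<and> j \<in> block_of \<pi> j"
proof -
  assume a: "\<pi> \<in> set_partitions n" "j < n"
  then obtain B where "B \<in> \<pi>" "j \<in> B" unfolding sp_def' by (metis UnionE atLeastLessThan_iff zero_le)
  then show ?thesis using block_of_eq[OF a(1)] by simp
qed

lemma sp_finite: "finite (set_partitions n)"
proof -
  have "set_partitions n \<subseteq> Pow (Pow {0..<n})" using sp_block_fin by blast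
  then show ?thesis by (rule finite_subset) auto
qed

lemma refines_block: "\<sigma> \<in> set_partitions n \<Longrightarrow> \<pi> \<in> set_partitions n \<Longrightarrow> refines \<sigma> \<pi> \<Longrightarrow> C \<in> \<sigma> \<Longrightarrow> i \<in> C \<Longrightarrow> C \<subseteq> block_of \<pi> i"
  unfolding refines_def by (metis block_of_eq subsetD)

lemma sp_disj: "\<pi> \<in> set_partitions n \<Longrightarrow> a \<in> \<pi> \<Longrightarrow> b \<in> \<pi> \<Longrightarrow> x \<in> a \<Longrightarrow> x \<in> b \<Longrightarrow> a = b"
  unfolding sp_def' by blast

lemma sp_subset_eq: "\<sigma> \<in> set_partitions n \<Longrightarrow> \<pi> \<in> set_partitions n \<Longrightarrow> \<sigma> \<subseteq> \<pi> \<Longrightarrow> \<sigma> = \<pi>"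
proof -
  assume a: "\<sigma> \<in> set_partitions n" "\<pi> \<in> set_partitions n" "\<sigma> \<subseteq> \<pi>"
  show ?thesis
  proof (rule antisym[OF a(3)], rule subsetI)
    fix B assume B: "B \<in> \<pi>"
    have "B \<noteq> {}" "B \<subseteq> {0..<n}" using sp_block_fin[OF a(2) B] by auto
    then obtain x where x: "x \<in> B" "x \<in> {0..<n}" by blast
    have "\<Union>\<sigma> = {0..<n}" using a(1) unfolding sp_def' by blast
    then obtain C where C: "C \<in> \<sigma>" "x \<in> C" using x(2) by blast
    have "C \<in> \<pi>" using C(1) a(3) by blast
    then have "C = B" using sp_disj[OF a(2) _ B C(2) x(1)] by blast
    then show "B \<in> \<sigma>" using C by simp
  qed
qed

interpretation SP: fposet "set_partitions n" refines
proof
  show "finite (set_partitions n)" by (rule sp_finite)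
next
  fix x assume "x \<in> set_partitions n" then show "refines x x" unfolding refines_def by blast
next
  fix x y z assume xy: "refines x y" and yz: "refines y z"
  show "refines x z" unfolding refines_def
  proof
    fix B assume "B \<in> x"
    then obtain C where C: "C \<in> y" "B \<subseteq> C" using xy unfolding refines_def by blast
    then obtain D where D: "D \<in> z" "C \<subseteq> D" using yz unfolding refines_def by blast
    then show "\<exists>D\<in>z. B \<subseteq> D" using C by blast
  qed
next
  fix x y assume a: "x \<in> set_partitions n" "y \<in> set_partitions n" "refines x y" "refines y x"
  have "x \<subseteq> y"
  proof
    fix B assume B: "B \<in> x"
    obtain C where C: "C \<in> y" "B \<subseteq> C" using a(3) B unfolding refines_def by blast
    obtain D where D: "D \<in> x" "C \<subseteq> D" using a(4) C unfolding refines_def by blast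
    have "B \<noteq> {}" using a(1) B unfolding sp_def' by blast
    then obtain e where "e \<in> B" by blast
    then have "B = D" using sp_disj[OF a(1) B D(1)] D C by blast
    then show "B \<in> y" using C D by auto
  qed
  then show "x = y" using sp_subset_eq a by blast
qed



lemma prod_list_sum_PiE:
  fixes f :: "'i \<Rightarrow> 'k \<Rightarrow> 'u::ring_1"
  assumes "distinct xs" "\<And>i. i \<in> set xs \<Longrightarrow> finite (A i)"
  shows "prod_list (map (\<lambda>i. \<Sum>k\<in>A i. f i k) xs) = (\<Sum>h\<in>PiE (set xs) A. prod_list (map (\<lambda>i. f i (h i)) xs))"
  using assms
proof (induction xs)
  case Nil
  then show ?case by simp
next
  case (Cons x xs)
  have nx: "x \<notin> set xs" using Cons.prems by simp
  have fin: "finite (PiE (set xs) A)" using Cons.prems by (simp add: finite_PiE)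
  have "(\<Sum>h\<in>PiE (set (x#xs)) A. prod_list (map (\<lambda>i. f i (h i)) (x#xs)))
      = (\<Sum>h\<in>PiE (insert x (set xs)) A. f x (h x) * prod_list (map (\<lambda>i. f i (if i = x then undefined else h i)) xs))"
  proof (rule sum.cong)
    show "PiE (set (x#xs)) A = PiE (insert x (set xs)) A" by simp
  next
    fix h
    have "prod_list (map (\<lambda>i. f i (if i = x then undefined else h i)) xs) = prod_list (map (\<lambda>i. f i (h i)) xs)"
      using nx by (intro arg_cong[where f=prod_list] map_cong) auto
    then show "prod_list (map (\<lambda>i. f i (h i)) (x#xs)) = f x (h x) * prod_list (map (\<lambda>i. f i (if i = x then undefined else h i)) xs)"
      by simp
  qed
  also have "\<dots> = (\<Sum>(y,g)\<in>A x \<times> PiE (set xs) A. f x y * prod_list (map (\<lambda>i. f i (g i)) xs))"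
    using nx
    by (intro sum.reindex_bij_witness[of _ "\<lambda>(y,g). g(x := y)" "\<lambda>g. (g x, g(x := undefined))"])
       (auto simp: PiE_def extensional_def intro!: arg_cong[where f=prod_list])
  also have "\<dots> = (\<Sum>y\<in>A x. \<Sum>g\<in>PiE (set xs) A. f x y * prod_list (map (\<lambda>i. f i (g i)) xs))"
    by (rule sum.cartesian_product[symmetric])
  also have "\<dots> = (\<Sum>y\<in>A x. f x y) * (\<Sum>g\<in>PiE (set xs) A. prod_list (map (\<lambda>i. f i (g i)) xs))"
    by (subst sum_distrib_right) (simp only: sum_distrib_left)
  also have "\<dots> = prod_list (map (\<lambda>i. \<Sum>k\<in>A i. f i k) (x#xs))"
    using Cons by simp
  finally show ?case ..
qed

lemma calg_scale: "complex_algebra sc \<Longrightarrow> sc a (sc b x) = sc (a*b) x"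
  unfolding complex_algebra_def vector_space_def by (simp add: module.scale_scale)
lemma calg_one: "complex_algebra sc \<Longrightarrow> sc 1 x = x"
  unfolding complex_algebra_def vector_space_def by (simp add: module.scale_one)

lemma scal_prod_list:
  assumes "complex_algebra sc"
  shows "prod_list (map (\<lambda>i. sc (c i) (Y i)) xs) = sc (prod_list (map c xs)) (prod_list (map Y xs))"
proof (induction xs)
  case Nil
  then show ?case using calg_one[OF assms] by simp
next
  case (Cons x xs)
  have m1: "\<And>c x y. sc c (x * y) = sc c x * y" and m2: "\<And>c x y. sc c (x * y) = x * sc c y"
    using assms unfolding complex_algebra_def by blast+
  have "prod_list (map (\<lambda>i. sc (c i) (Y i)) (x#xs)) = sc (c x) (Y x) * sc (prod_list (map c xs)) (prod_list (map Y xs))"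
    using Cons by simp
  also have "\<dots> = sc (c x) (sc (prod_list (map c xs)) (Y x * prod_list (map Y xs)))"
  proof -
    have "sc (c x) (Y x) * sc (prod_list (map c xs)) (prod_list (map Y xs)) = sc (c x) (Y x * sc (prod_list (map c xs)) (prod_list (map Y xs)))"
      by (rule m1[symmetric])
    also have "Y x * sc (prod_list (map c xs)) (prod_list (map Y xs)) = sc (prod_list (map c xs)) (Y x * prod_list (map Y xs))"
      by (rule m2[symmetric])
    finally show ?thesis .
  qed
  also have "\<dots> = sc (prod_list (map c (x#xs))) (prod_list (map Y (x#xs)))"
    using calg_scale[OF assms] by simp
  finally show ?case .
qed

lemma extend_bij:
  fixes g :: "'a \<Rightarrow> 'a"
  assumes "finite A" "inj_on g A"
  shows "\<exists>s. bij s \<and> (\<forall>x\<in>A. s x = g x)"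
proof -
  define S where "S = A \<union> g ` A"
  have fS: "finite S" using assms S_def by simp
  have cA: "card (g ` A) = card A" using assms card_image by blast
  have "card (S - A) = card (S - g ` A)"
    using fS cA by (simp add: S_def card_Diff_subset assms(1))
  then obtain b where b: "bij_betw b (S - A) (S - g ` A)"
    using finite_same_card_bij fS by (meson finite_Diff)
  define s where "s x = (if x \<in> A then g x else if x \<in> S then b x else x)" for x
  have 1: "bij_betw s A (g ` A)"
    using inj_on_imp_bij_betw[OF assms(2)] by (rule bij_betw_cong[THEN iffD1, rotated]) (simp add: s_def)
  have 2: "bij_betw s (S - A) (S - g ` A)"
    using b by (rule bij_betw_cong[THEN iffD1, rotated]) (simp add: s_def)
  have 3: "bij_betw s (- S) (- S)"
    by (rule bij_betw_cong[THEN iffD1, rotated], rule bij_betw_id) (auto simp: s_def S_def)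
  have "bij_betw s (A \<union> (S - A)) (g ` A \<union> (S - g ` A))"
    by (rule bij_betw_combine[OF 1 2]) auto
  then have "bij_betw s S S" by (simp add: S_def Un_absorb1 Un_commute)
  then have "bij_betw s (S \<union> - S) (S \<union> - S)"
    by (rule bij_betw_combine[OF _ 3]) auto
  then have "bij s" by simp
  then show ?thesis by (auto simp: s_def)
qed

definition kerp :: "nat \<Rightarrow> (nat \<Rightarrow> 'b) \<Rightarrow> nat set set" where
  "kerp n a = (\<lambda>i. {j\<in>{0..<n}. a j = a i}) ` {0..<n}"

lemma kerp_sp: "kerp n a \<in> set_partitions n"
  unfolding sp_def'
proof (intro conjI ballI impI)
  show "\<Union>(kerp n a) = {0..<n}" unfolding kerp_def by blast
  show "{} \<notin> kerp n a" unfolding kerp_def by blast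
  fix A B assume A: "A \<in> kerp n a" and B: "B \<in> kerp n a" and ne: "A \<noteq> B"
  from A obtain i where i: "A = {j\<in>{0..<n}. a j = a i}" unfolding kerp_def by blast
  from B obtain k where k: "B = {j\<in>{0..<n}. a j = a k}" unfolding kerp_def by blast
  have "a i \<noteq> a k" using ne i k by auto
  then show "A \<inter> B = {}" using i k by auto
qed

lemma kerp_block: "i < n \<Longrightarrow> block_of (kerp n a) i = {j\<in>{0..<n}. a j = a i}"
  by (rule block_of_eq[OF kerp_sp]) (auto simp: kerp_def)

lemma exch_ax:
  assumes E: "exchangeability_system scA phi scU phiU iota" and s: "bij s"
  shows "phiU (prod_list (map (\<lambda>(x, i). iota i x) xs)) = phiU (prod_list (map (\<lambda>(x, i). iota (s i) x) xs))"
proof -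
  have "\<forall>(xs :: ('a \<times> nat) list) (s :: nat \<Rightarrow> nat). bij s \<longrightarrow>
        phiU (prod_list (map (\<lambda>(x, i). iota i x) xs)) =
        phiU (prod_list (map (\<lambda>(x, i). iota (s i) x) xs))"
    using E unfolding exchangeability_system_def by (rule conjunct2[THEN conjunct2, THEN conjunct2])
  then show ?thesis using s by blast
qed

lemma exch_kerp:
  assumes E: "exchangeability_system scA phi scU phiU iota"
  shows "phiU (prod_list (map (\<lambda>i. iota (a i) (X i)) [0..<n])) = phi_part phiU iota n (kerp n a) X"
proof -
  define m where "m i = Min {j\<in>{0..<n}. a j = a i}" for i
  have mi: "m i \<in> {j\<in>{0..<n}. a j = a i}" if "i < n" for i
  proof -
    have "finite {j\<in>{0..<n}. a j = a i}" by simp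
    moreover have "i \<in> {j\<in>{0..<n}. a j = a i}" using that by simp
    ultimately show ?thesis unfolding m_def by (metis Min_in empty_iff)
  qed
  define g where "g v = m (SOME i. i < n \<and> a i = v)" for v
  have gi: "g (a i) = m i" if i: "i < n" for i
  proof -
    define i' where "i' = (SOME i'. i' < n \<and> a i' = a i)"
    have "i' < n \<and> a i' = a i" unfolding i'_def by (rule someI[of _ i]) (use i in simp)
    then have "m i' = m i" unfolding m_def by simp
    then show ?thesis unfolding g_def i'_def[symmetric] .
  qed
  have inj: "inj_on g (a ` {0..<n})"
  proof (rule inj_onI)
    fix u v assume u: "u \<in> a ` {0..<n}" and v: "v \<in> a ` {0..<n}" and e: "g u = g v"
    from u obtain i where i: "i < n" "u = a i" by auto
    from v obtain j where j: "j < n" "v = a j" by auto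
    have "m i = m j" using e gi[OF i(1)] gi[OF j(1)] i(2) j(2) by simp
    moreover have "a (m i) = a i" "a (m j) = a j" using mi[OF i(1)] mi[OF j(1)] by simp_all
    ultimately show "u = v" using i(2) j(2) by simp
  qed
  obtain s where s: "bij s" "\<forall>x\<in>a ` {0..<n}. s x = g x" using extend_bij[OF _ inj] by blast
  have sa: "s (a j) = Min (block_of (kerp n a) j)" if j: "j < n" for j
  proof -
    have "s (a j) = g (a j)" using s(2) j by simp
    also have "\<dots> = m j" using gi[OF j] .
    also have "\<dots> = Min (block_of (kerp n a) j)" unfolding m_def kerp_block[OF j] ..
    finally show ?thesis .
  qed
  have ex: "phiU (prod_list (map (\<lambda>(x, i). iota i x) (map (\<lambda>i. (X i, a i)) [0..<n]))) =
        phiU (prod_list (map (\<lambda>(x, i). iota (s i) x) (map (\<lambda>i. (X i, a i)) [0..<n])))"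
    by (rule exch_ax[OF E s(1), where xs="map (\<lambda>i. (X i, a i)) [0..<n]"])
  have m1: "map (\<lambda>(x, i). iota i x) (map (\<lambda>i. (X i, a i)) [0..<n]) = map (\<lambda>i. iota (a i) (X i)) [0..<n]"
    by simp
  have m2: "map (\<lambda>(x, i). iota (s i) x) (map (\<lambda>i. (X i, a i)) [0..<n])
      = map (\<lambda>j. iota (Min (block_of (kerp n a) j)) (X j)) [0..<n]"
    unfolding map_map by (intro map_cong) (auto simp: sa)
  have "phiU (prod_list (map (\<lambda>i. iota (a i) (X i)) [0..<n])) =
    phiU (prod_list (map (\<lambda>j. iota (Min (block_of (kerp n a) j)) (X j)) [0..<n]))"
    using ex by (simp only: m1 m2)
  then show ?thesis unfolding phi_part_def .
qed



lemma prod_list_upt: "prod_list (map f [0..<n]) = prod f {0..<(n::nat)}"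
  by (metis distinct_upt prod.distinct_set_conv_list set_upt)

lemma geo_root:
  assumes "primitive_root bb z" "0 < c" "c \<le> bb"
  shows "(\<Sum>j<bb. (z ^ (j+1)) ^ c) = (if c = bb then of_nat bb else 0)"
proof (cases "c = bb")
  case True
  have "(z ^ (j+1)) ^ c = 1" for j
    using assms(1) True unfolding primitive_root_def by (metis mult.commute power_mult power_one)
  then show ?thesis using True by simp
next
  case False
  define u where "u = z ^ c"
  have u1: "u \<noteq> 1" using assms False unfolding primitive_root_def u_def by auto
  have ub: "u ^ bb = 1" using assms(1) unfolding primitive_root_def u_def
    by (metis mult.commute power_mult power_one)
  have "(\<Sum>j<bb. (z ^ (j+1)) ^ c) = (\<Sum>j<bb. u * u ^ j)"
    unfolding u_def by (intro sum.cong refl) (metis mult.commute power_Suc power_mult Suc_eq_plus1)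
  also have "\<dots> = u * (\<Sum>j<bb. u ^ j)" by (simp add: sum_distrib_left)
  also have "\<dots> = 0" using u1 ub by (simp add: sum_gp_strict)
  finally show ?thesis using False by simp
qed

locale psetup =
  fixes n :: nat and \<pi> :: "nat set set" and \<omega> :: "nat set \<Rightarrow> complex"
  assumes hpi: "\<pi> \<in> set_partitions n"
    and prim: "\<forall>B\<in>\<pi>. primitive_root (card B) (\<omega> B)"
begin

definition "bl i = block_of \<pi> i"
definition "bn i = card (bl i)"
definition "ks i = sorted_list_of_set (bl i)"
definition "om i = \<omega> (bl i)"
definition "HH = PiE {0..<n} (\<lambda>i. {..<bn i})"
definition "av h i = ks i ! (h i)"
definition "w h = (\<Prod>i\<in>{0..<n}. om i ^ (h i + 1))"
definition "Hc \<sigma> = {h\<in>HH. \<forall>C\<in>\<sigma>. \<forall>i\<in>C. \<forall>j\<in>C. h i = h j}"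

lemma bl_mem: "i < n \<Longrightarrow> bl i \<in> \<pi> \<and> i \<in> bl i"
  unfolding bl_def using block_of_mem hpi by blast

lemma bl_fin: "i < n \<Longrightarrow> finite (bl i)"
  using bl_mem sp_block_fin hpi by blast

lemma bl_eq: "i < n \<Longrightarrow> j \<in> bl i \<Longrightarrow> bl j = bl i"
  unfolding bl_def using block_of_eq hpi block_of_mem by blast

lemma av_in: "h \<in> HH \<Longrightarrow> i < n \<Longrightarrow> av h i \<in> bl i"
  unfolding HH_def av_def ks_def bn_def using bl_fin
  by (metis PiE_mem atLeastLessThan_iff lessThan_iff nth_mem set_sorted_list_of_set zero_le length_sorted_list_of_set)

lemma HH_fin: "finite HH" unfolding HH_def by (simp add: finite_PiE)

lemma kerp_L: "h \<in> HH \<Longrightarrow> kerp n (av h) \<in> set_partitions n \<and> refines (kerp n (av h)) \<pi>"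
proof -
  assume h: "h \<in> HH"
  have "{j\<in>{0..<n}. av h j = av h i} \<subseteq> bl i" if i: "i < n" for i
  proof
    fix j assume j: "j \<in> {j\<in>{0..<n}. av h j = av h i}"
    then have "av h i \<in> bl j" using av_in[OF h, of j] by auto
    then have "bl i = bl j" using bl_eq[of j "av h i"] bl_eq[of i "av h i"] av_in[OF h i] i j by auto
    then show "j \<in> bl i" using bl_mem j by auto
  qed
  then have sub: "\<And>i. i < n \<Longrightarrow> {j\<in>{0..<n}. av h j = av h i} \<subseteq> bl i" by blast
  have "refines (kerp n (av h)) \<pi>" unfolding refines_def
  proof
    fix K assume "K \<in> kerp n (av h)"
    then obtain i where i: "i < n" "K = {j\<in>{0..<n}. av h j = av h i}" unfolding kerp_def by auto
    then show "\<exists>C\<in>\<pi>. K \<subseteq> C" using sub[OF i(1)] bl_mem[OF i(1)] by blast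
  qed
  then show ?thesis using kerp_sp by blast
qed

lemma Hc_eq:
  assumes x: "x \<in> set_partitions n" "refines x \<pi>"
  shows "{h\<in>HH. refines x (kerp n (av h))} = Hc x"
proof (intro equalityI subsetI)
  fix h assume "h \<in> {h\<in>HH. refines x (kerp n (av h))}"
  then have h: "h \<in> HH" "refines x (kerp n (av h))" by auto
  have "h i = h j" if C: "C \<in> x" "i \<in> C" "j \<in> C" for C i j
  proof -
    obtain K where K: "K \<in> kerp n (av h)" "C \<subseteq> K" using h(2) C unfolding refines_def by blast
    then obtain k where k: "K = {j\<in>{0..<n}. av h j = av h k}" unfolding kerp_def by auto
    have "i \<in> K" "j \<in> K" using K(2) C(2,3) by auto
    then have "av h i = av h k" "av h j = av h k" using k by auto
    then have ae: "av h i = av h j" by simp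
    have ij: "i < n" "j < n" using sp_block_fin[OF x(1) C(1)] C(2,3) by auto
    have "C \<subseteq> bl i" using refines_block[OF x(1) hpi x(2) C(1,2)] unfolding bl_def .
    then have "j \<in> bl i" using C(3) by blast
    then have bj: "bl j = bl i" using bl_eq[OF ij(1)] by blast
    have "h i \<in> {..<bn i}" "h j \<in> {..<bn j}" using h(1) ij unfolding HH_def by (auto simp: PiE_iff)
    moreover have "length (ks i) = bn i" unfolding ks_def bn_def using bl_fin[OF ij(1)] by simp
    moreover have "bn j = bn i" unfolding bn_def using bj by simp
    ultimately have lens: "h i < length (ks i)" "h j < length (ks i)" by auto
    have "ks i ! h i = ks i ! h j" using ae bj unfolding av_def ks_def by simp
    moreover have "distinct (ks i)" unfolding ks_def by simp
    ultimately show ?thesis using nth_eq_iff_index_eq[OF _ lens] by blast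
  qed
  then show "h \<in> Hc x" using h unfolding Hc_def by blast
next
  fix h assume h: "h \<in> Hc x"
  have "\<exists>K\<in>kerp n (av h). C \<subseteq> K" if C: "C \<in> x" for C
  proof -
    obtain i where i: "i \<in> C" using sp_block_fin[OF x(1) C] by blast
    have ii: "i < n" using sp_block_fin[OF x(1) C] i by auto
    have "C \<subseteq> {j\<in>{0..<n}. av h j = av h i}"
    proof
      fix j assume j: "j \<in> C"
      have jj: "j < n" using sp_block_fin[OF x(1) C] j by auto
      have "C \<subseteq> bl i" using refines_block[OF x(1) hpi x(2) C i] unfolding bl_def .
      then have "j \<in> bl i" using j by blast
      then have "bl j = bl i" using bl_eq[OF ii] by blast
      moreover have "h j = h i" using h C i j unfolding Hc_def by blast
      ultimately show "j \<in> {j\<in>{0..<n}. av h j = av h i}" using jj unfolding av_def ks_def by simp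
    qed
    then show ?thesis using ii unfolding kerp_def by auto
  qed
  then show "h \<in> {h\<in>HH. refines x (kerp n (av h))}" using h unfolding Hc_def refines_def by blast
qed

end


context psetup begin

lemma key_sum:
  assumes x: "\<sigma> \<in> set_partitions n" "refines \<sigma> \<pi>"
  shows "(\<Sum>h\<in>Hc \<sigma>. w h) = (if \<sigma> = \<pi> then of_nat (\<Prod>B\<in>\<pi>. card B) else 0)"
proof -
  define T where "T = PiE \<sigma> (\<lambda>C. {..<bn (Min C)})"
  define ht where "ht t = restrict (\<lambda>i. t (block_of \<sigma> i)) {0..<n}" for t :: "nat set \<Rightarrow> nat"
  define th where "th h = restrict (\<lambda>C. h (Min C)) \<sigma>" for h :: "nat \<Rightarrow> nat"
  have Cfacts: "finite C \<and> C \<noteq> {} \<and> C \<subseteq> {0..<n} \<and> Min C \<in> C \<and> C \<subseteq> bl (Min C) \<and> Min C < n" if C: "C \<in> \<sigma>" for C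
  proof -
    have 1: "finite C \<and> C \<noteq> {} \<and> C \<subseteq> {0..<n}" using sp_block_fin[OF x(1) C] .
    then have 2: "Min C \<in> C" by simp
    then have "C \<subseteq> bl (Min C)" unfolding bl_def using refines_block[OF x(1) hpi x(2) C] by blast
    moreover have "Min C < n" using 1 2 by (meson atLeastLessThan_iff subsetD)
    ultimately show ?thesis using 1 2 by blast
  qed
  have Cin: "block_of \<sigma> i = C \<and> bl i = bl (Min C) \<and> i < n" if C: "C \<in> \<sigma>" "i \<in> C" for C i
  proof -
    have "block_of \<sigma> i = C" using block_of_eq[OF x(1) C] .
    moreover have "i < n" using Cfacts[OF C(1)] C(2) by auto
    moreover then have "bl i = bl (Min C)" using Cfacts[OF C(1)] C(2) bl_eq by blast
    ultimately show ?thesis by blast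
  qed
  have bs: "block_of \<sigma> i \<in> \<sigma> \<and> i \<in> block_of \<sigma> i" if "i < n" for i
    using block_of_mem[OF x(1) that] .
  have s1: "(\<Sum>h\<in>Hc \<sigma>. w h) = (\<Sum>t\<in>T. w (ht t))"
  proof (rule sum.reindex_bij_witness[of _ ht th])
    fix a assume a: "a \<in> Hc \<sigma>"
    show "ht (th a) = a"
    proof
      fix i show "ht (th a) i = a i"
      proof (cases "i < n")
        case True
        have "Min (block_of \<sigma> i) \<in> block_of \<sigma> i" using Cfacts bs True by blast
        then have "a (Min (block_of \<sigma> i)) = a i" using a bs[OF True] unfolding Hc_def by blast
        then show ?thesis using True bs unfolding ht_def th_def by auto
      next
        case False
        then show ?thesis using a unfolding ht_def Hc_def HH_def by (auto simp: PiE_iff extensional_def)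
      qed
    qed
    show "th a \<in> T"
      using a Cfacts unfolding th_def T_def Hc_def HH_def by (auto simp: PiE_iff)
    show "w (ht (th a)) = w a" using \<open>ht (th a) = a\<close> by simp
  next
    fix b assume b: "b \<in> T"
    show "th (ht b) = b"
    proof
      fix C show "th (ht b) C = b C"
      proof (cases "C \<in> \<sigma>")
        case True
        then show ?thesis using Cfacts[OF True] Cin[OF True] unfolding th_def ht_def by auto
      next
        case False
        then show ?thesis using b unfolding th_def T_def by (auto simp: PiE_iff extensional_def)
      qed
    qed
    show "ht b \<in> Hc \<sigma>"
    proof -
      have "ht b \<in> HH"
        unfolding HH_def ht_def
      proof (rule restrict_PiE_iff[THEN iffD2], intro ballI)
        fix i assume "i \<in> {0..<n}"
        then have i: "i < n" by simp
        have "b (block_of \<sigma> i) < bn (Min (block_of \<sigma> i))" using b bs[OF i] unfolding T_def by auto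
        moreover have "bl i = bl (Min (block_of \<sigma> i))" using Cin bs[OF i] by blast
        ultimately show "b (block_of \<sigma> i) \<in> {..<bn i}" unfolding bn_def by simp
      qed
      moreover have "\<forall>C\<in>\<sigma>. \<forall>i\<in>C. \<forall>j\<in>C. ht b i = ht b j"
        using Cin unfolding ht_def by auto
      ultimately show ?thesis unfolding Hc_def by blast
    qed
  qed
  define F where "F C j = (om (Min C) ^ (j + 1)) ^ card C" for C j
  have s2: "w (ht t) = (\<Prod>C\<in>\<sigma>. F C (t C))" if t: "t \<in> T" for t
  proof -
    have U: "\<Union>\<sigma> = {0..<n}" using x(1) unfolding sp_def' by blast
    have "w (ht t) = (\<Prod>i\<in>\<Union>\<sigma>. om i ^ (ht t i + 1))" unfolding w_def U ..
    also have "\<dots> = (\<Prod>C\<in>\<sigma>. \<Prod>i\<in>C. om i ^ (ht t i + 1))"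
      by (subst prod.Union_disjoint) (use Cfacts x(1) in \<open>auto simp: sp_def'\<close>)
    also have "\<dots> = (\<Prod>C\<in>\<sigma>. \<Prod>i\<in>C. om (Min C) ^ (t C + 1))"
    proof (intro prod.cong refl)
      fix C i assume "C \<in> \<sigma>" "i \<in> C"
      then show "om i ^ (ht t i + 1) = om (Min C) ^ (t C + 1)"
        using Cin[of C i] unfolding ht_def om_def by auto
    qed
    also have "\<dots> = (\<Prod>C\<in>\<sigma>. F C (t C))" unfolding F_def by simp
    finally show ?thesis .
  qed
  have s3: "(\<Sum>t\<in>T. \<Prod>C\<in>\<sigma>. F C (t C)) = (\<Prod>C\<in>\<sigma>. \<Sum>j\<in>{..<bn (Min C)}. F C j)"
    unfolding T_def by (rule prod_sum_PiE[symmetric]) (use sp_fin x(1) in auto)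
  have s4: "(\<Sum>j\<in>{..<bn (Min C)}. F C j) = (if card C = bn (Min C) then of_nat (bn (Min C)) else 0)"
    if C: "C \<in> \<sigma>" for C
  proof -
    have m: "bl (Min C) \<in> \<pi>" using bl_mem Cfacts[OF C] by blast
    have "card C \<le> bn (Min C)" unfolding bn_def using Cfacts[OF C] bl_fin card_mono by blast
    moreover have "0 < card C" using Cfacts[OF C] by (simp add: card_gt_0_iff)
    ultimately show ?thesis unfolding F_def om_def bn_def
      using geo_root[of "card (bl (Min C))" "\<omega> (bl (Min C))" "card C"] prim m by (simp add: lessThan_def)
  qed
  have "(\<Sum>h\<in>Hc \<sigma>. w h) = (\<Prod>C\<in>\<sigma>. if card C = bn (Min C) then of_nat (bn (Min C)) else 0)"
    using s1 s2 s3 s4 by simp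
  also have "\<dots> = (if \<sigma> = \<pi> then of_nat (\<Prod>B\<in>\<pi>. card B) else 0)"
  proof (cases "\<sigma> = \<pi>")
    case True
    have "bl (Min C) = C" if "C \<in> \<pi>" for C
      using Cfacts[of C] True that block_of_eq[OF hpi that] unfolding bl_def by auto
    then have "(\<Prod>C\<in>\<sigma>. if card C = bn (Min C) then of_nat (bn (Min C)) else 0) = (\<Prod>C\<in>\<pi>. of_nat (card C) :: complex)"
      using True unfolding bn_def by (intro prod.cong) auto
    then show ?thesis using True by simp
  next
    case False
    then obtain C where C: "C \<in> \<sigma>" "C \<notin> \<pi>" using sp_subset_eq[OF x(1) hpi] by blast
    have "bl (Min C) \<in> \<pi>" using bl_mem Cfacts[OF C(1)] by blast
    then have "C \<subset> bl (Min C)" using C Cfacts[OF C(1)] by auto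
    then have "card C < bn (Min C)" unfolding bn_def using bl_fin Cfacts[OF C(1)] psubset_card_mono by blast
    then have "\<exists>C\<in>\<sigma>. (if card C = bn (Min C) then of_nat (bn (Min C)) else 0) = (0::complex)"
      using C(1) by (intro bexI[of _ C]) auto
    then have "(\<Prod>C\<in>\<sigma>. if card C = bn (Min C) then of_nat (bn (Min C)) else 0) = (0::complex)"
      by (intro prod_zero sp_fin[OF x(1)])
    then show ?thesis using False by simp
  qed
  finally show ?thesis .
qed

end



theorem proposition2p8:
  fixes scA :: "complex \<Rightarrow> 'a::ring_1 \<Rightarrow> 'a" and phi :: "'a \<Rightarrow> complex"
    and scU :: "complex \<Rightarrow> 'u::ring_1 \<Rightarrow> 'u" and phiU :: "'u \<Rightarrow> complex"
    and iota :: "nat \<Rightarrow> 'a \<Rightarrow> 'u"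
    and n :: nat and X :: "nat \<Rightarrow> 'a" and \<pi> :: "nat set set" and \<omega> :: "nat set \<Rightarrow> complex"
  assumes "exchangeability_system scA phi scU phiU iota"
    and "\<pi> \<in> set_partitions n"
    and "\<forall>B\<in>\<pi>. primitive_root (card B) (\<omega> B)"
  shows "cumulant phiU iota n \<pi> X =
    phiU (prod_list (map (X_twist scU iota \<pi> \<omega> X) [0..<n])) / of_nat (\<Prod>B\<in>\<pi>. card B)"
proof -
  interpret psetup n \<pi> \<omega> using assms(2,3) by unfold_locales
  have calg: "complex_algebra scU" and lin: "Vector_Spaces.linear scU (*) phiU"
    using assms(1) unfolding exchangeability_system_def ncps_def by blast+
  have lsum: "phiU (sum f A) = (\<Sum>x\<in>A. phiU (f x))" for f :: "_ \<Rightarrow> 'u" and A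
    using lin by (simp add: linear_iff_module_hom module_hom.sum)
  have lscale: "phiU (scU c y) = c * phiU y" for c y
    using lin by (simp add: linear_iff_module_hom module_hom.scale)
  define P where "P = (\<Prod>B\<in>\<pi>. card B)"
  define L where "L = {\<sigma>\<in>set_partitions n. refines \<sigma> \<pi>}"
  define phs where "phs \<sigma> = phi_part phiU iota n \<sigma> X" for \<sigma>
  define W where "W \<sigma> = (\<Sum>h\<in>{h\<in>HH. kerp n (av h) = \<sigma>}. w h)" for \<sigma>
  have Lfin: "finite L" unfolding L_def using sp_finite by simp
  have Pnz: "of_nat P \<noteq> (0::complex)"
  proof -
    have "\<forall>B\<in>\<pi>. card B \<noteq> 0" using sp_block_fin[OF hpi] by auto
    then show ?thesis unfolding P_def using sp_fin[OF hpi] by simp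
  qed
  have tw: "X_twist scU iota \<pi> \<omega> X i = (\<Sum>j\<in>{..<bn i}. scU (om i ^ (j+1)) (iota (ks i ! j) (X i)))" for i
    unfolding X_twist_def Let_def bl_def bn_def ks_def om_def by simp
  have "phiU (prod_list (map (X_twist scU iota \<pi> \<omega> X) [0..<n]))
      = phiU (prod_list (map (\<lambda>i. \<Sum>j\<in>{..<bn i}. scU (om i ^ (j+1)) (iota (ks i ! j) (X i))) [0..<n]))"
    using tw by metis
  also have "\<dots> = phiU (\<Sum>h\<in>HH. prod_list (map (\<lambda>i. scU (om i ^ (h i+1)) (iota (ks i ! h i) (X i))) [0..<n]))"
    unfolding HH_def by (subst prod_list_sum_PiE) auto
  also have "\<dots> = phiU (\<Sum>h\<in>HH. scU (w h) (prod_list (map (\<lambda>i. iota (av h i) (X i)) [0..<n])))"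
    unfolding scal_prod_list[OF calg] w_def av_def prod_list_upt ..
  also have "\<dots> = (\<Sum>h\<in>HH. w h * phiU (prod_list (map (\<lambda>i. iota (av h i) (X i)) [0..<n])))"
    unfolding lsum lscale ..
  also have "\<dots> = (\<Sum>h\<in>HH. w h * phs (kerp n (av h)))"
    unfolding phs_def exch_kerp[OF assms(1)] ..
  also have "\<dots> = (\<Sum>\<sigma>\<in>L. \<Sum>h\<in>{h\<in>HH. kerp n (av h) = \<sigma>}. w h * phs (kerp n (av h)))"
    by (rule sum.group[symmetric]) (use HH_fin Lfin kerp_L in \<open>auto simp: L_def\<close>)
  also have "\<dots> = (\<Sum>\<sigma>\<in>L. phs \<sigma> * W \<sigma>)"
    unfolding W_def sum_distrib_left by (intro sum.cong refl) (auto simp: mult.commute)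
  finally have N: "phiU (prod_list (map (X_twist scU iota \<pi> \<omega> X) [0..<n])) = (\<Sum>\<sigma>\<in>L. phs \<sigma> * W \<sigma>)" .
  have Wmu: "W \<sigma> / of_nat P = of_int (mu_part n \<sigma> \<pi>)" if s: "\<sigma> \<in> L" for \<sigma>
  proof -
    let ?Iv = "fposet.Iv (set_partitions n) refines"
    have g: "(\<Sum>z\<in>?Iv x \<pi>. W z / of_nat P) = (if x = \<pi> then 1 else 0)"
      if x: "x \<in> set_partitions n" "refines x \<pi>" for x
    proof -
      have Ivx: "z \<in> ?Iv x \<pi> \<longleftrightarrow> z \<in> set_partitions n \<and> refines x z \<and> refines z \<pi>" for z
        by (simp add: SP.Iv_def)
      define S where "S = {h\<in>HH. refines x (kerp n (av h))}"
      have "(\<Sum>z\<in>?Iv x \<pi>. W z) = (\<Sum>z\<in>?Iv x \<pi>. \<Sum>h\<in>{h\<in>S. kerp n (av h) = z}. w h)"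
        unfolding W_def S_def by (intro sum.cong refl arg_cong[where f="\<lambda>A. sum w A"]) (auto simp: Ivx)
      also have "\<dots> = (\<Sum>h\<in>S. w h)"
      proof (rule sum.group)
        show "finite S" using HH_fin unfolding S_def by simp
        show "finite (?Iv x \<pi>)" by (rule SP.Iv_fin)
        show "(\<lambda>h. kerp n (av h)) ` S \<subseteq> ?Iv x \<pi>"
          using kerp_L unfolding S_def by (auto simp: Ivx)
      qed
      also have "\<dots> = (if x = \<pi> then of_nat P else 0)"
        unfolding S_def Hc_eq[OF x] key_sum[OF x] P_def ..
      finally show ?thesis using Pnz by (simp add: sum_divide_distrib[symmetric])
    qed
    have "W \<sigma> / of_nat P = of_int (mobius (set_partitions n) refines \<sigma> \<pi>)"
      by (rule SP.mobius_unique[OF hpi g]) (use s in \<open>auto simp: L_def\<close>)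
    then show ?thesis unfolding mu_part_def .
  qed
  have "cumulant phiU iota n \<pi> X = (\<Sum>\<sigma>\<in>L. phs \<sigma> * of_int (mu_part n \<sigma> \<pi>))"
    unfolding cumulant_def L_def phs_def ..
  also have "\<dots> = (\<Sum>\<sigma>\<in>L. phs \<sigma> * W \<sigma>) / of_nat P"
    unfolding sum_divide_distrib by (intro sum.cong refl) (simp add: Wmu[symmetric])
  finally show ?thesis unfolding N P_def .
qed


end
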